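(* Suppose $\mu>0$ satisfies $\mu/2\le v_{\max}<\mu$, where $v_{\max}$ is the largest value $v_i(S)$ over all bidders $i$ and $S\in\mathcal S_i$. Then the multiplicative price update algorithm with $p_0=\frac{\mu}{4bm}$ and $r=(4bm)^{1/b}$, run on truthful input, outputs an allocation $S$ in which every good is allocated at most $b$ times, and $$v(S)\ge\frac{\mathrm{OPT}}{2(b(r-1)+1)}\ge \frac{\mathrm{OPT}}{O(b\, m^{1/b})}.$$
   Context: Multi-unit combinatorial auction: a set $\mathsf U$ of $m$ goods, each available in $b\ge1$ copies; $n$ bidders, bidder $i$ having a collection $\mathcal S_i$ of $k$ nonempty subsets of $\mathsf U$ and valuation $v_i:\mathcal S_i\to\mathbb R_{\ge0}$, extended to all $T\subseteq\mathsf U$ by $v_i(T)=\max\{v_i(S'):S'\in\mathcal S_i, S'\subseteq T\}$ ($0$ if none). $v(S)=\sum_i v_i(S_i)$ and $\mathrm{OPT}$ is the maximum of $\sum_i v_i(T_i)$ over allocations in which every good belongs to at most $b$ sets. Multiplicative price update algorithm (parameters $p_0,r$): set $p_e^1=p_0$ for all goods $e$; for $i=1,\dots,n$ in a fixed order: let $S_i$ be a set maximizing $v_i(S)$ among $S\in\mathcal S_i$ with $v_i(S)\ge\sum_{e\in S}p_e^i$ ($S_i=\emptyset$ if none); set $p_e^{i+1}=r\,p_e^i$ for $e\in S_i$, $p_e^{i+1}=p_e^i$ otherwise; output $(S_1,\dots,S_n)$. *)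

theory Defs
  imports Complex_Main
begin

text \<open>Bidders are 0,...,n-1 (0-based); goods have type 'g and form the finite set U.
  Sc i is the collection of bundles of bidder i, v i its valuation on these bundles.\<close>

definition vext :: "(nat \<Rightarrow> 'g set set) \<Rightarrow> (nat \<Rightarrow> 'g set \<Rightarrow> real) \<Rightarrow> nat \<Rightarrow> 'g set \<Rightarrow> real" where
  "vext Sc v i T = (if {S'\<in>Sc i. S' \<subseteq> T} = {} then 0 else Max (v i ` {S'\<in>Sc i. S' \<subseteq> T}))"

definition welfare :: "nat \<Rightarrow> (nat \<Rightarrow> 'g set set) \<Rightarrow> (nat \<Rightarrow> 'g set \<Rightarrow> real) \<Rightarrow> (nat \<Rightarrow> 'g set) \<Rightarrow> real" where
  "welfare n Sc v T = (\<Sum>i<n. vext Sc v i (T i))"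

definition feasible_alloc :: "'g set \<Rightarrow> nat \<Rightarrow> nat \<Rightarrow> (nat \<Rightarrow> 'g set) \<Rightarrow> bool" where
  "feasible_alloc U b n T \<longleftrightarrow> (\<forall>i<n. T i \<subseteq> U) \<and> (\<forall>e\<in>U. card {i. i < n \<and> e \<in> T i} \<le> b)"

definition OPT :: "'g set \<Rightarrow> nat \<Rightarrow> nat \<Rightarrow> (nat \<Rightarrow> 'g set set) \<Rightarrow> (nat \<Rightarrow> 'g set \<Rightarrow> real) \<Rightarrow> real" where
  "OPT U b n Sc v = Sup {welfare n Sc v T | T. feasible_alloc U b n T}"

definition vmax :: "nat \<Rightarrow> (nat \<Rightarrow> 'g set set) \<Rightarrow> (nat \<Rightarrow> 'g set \<Rightarrow> real) \<Rightarrow> real" where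
  "vmax n Sc v = Max {v i S | i S. i < n \<and> S \<in> Sc i}"

fun mpu_price :: "real \<Rightarrow> real \<Rightarrow> (nat \<Rightarrow> 'g set) \<Rightarrow> nat \<Rightarrow> 'g \<Rightarrow> real" where
  "mpu_price p0 r S 0 e = p0"
| "mpu_price p0 r S (Suc i) e = (if e \<in> S i then r * mpu_price p0 r S i e else mpu_price p0 r S i e)"

definition affordable :: "(nat \<Rightarrow> 'g set set) \<Rightarrow> (nat \<Rightarrow> 'g set \<Rightarrow> real) \<Rightarrow> real \<Rightarrow> real \<Rightarrow> (nat \<Rightarrow> 'g set) \<Rightarrow> nat \<Rightarrow> 'g set set" where
  "affordable Sc v p0 r S i = {T \<in> Sc i. v i T \<ge> (\<Sum>e\<in>T. mpu_price p0 r S i e)}"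

text \<open>S is an output of the multiplicative price update algorithm (any tie-breaking).\<close>
definition mpu_run :: "nat \<Rightarrow> (nat \<Rightarrow> 'g set set) \<Rightarrow> (nat \<Rightarrow> 'g set \<Rightarrow> real) \<Rightarrow> real \<Rightarrow> real \<Rightarrow> (nat \<Rightarrow> 'g set) \<Rightarrow> bool" where
  "mpu_run n Sc v p0 r S \<longleftrightarrow> (\<forall>i<n.
      (if affordable Sc v p0 r S i = {} then S i = {}
       else S i \<in> affordable Sc v p0 r S i \<and> (\<forall>T\<in>affordable Sc v p0 r S i. v i T \<le> v i (S i))))"

end

theory Submission
  imports Defs
begin

lemma price_formula:
  "mpu_price p0 r S i e = p0 * r ^ card {j. j < i \<and> e \<in> S j}"
proof (induction i)
  case 0 then show ?case by simp
next
  case (Suc i)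
  show ?case
  proof (cases "e \<in> S i")
    case True
    have eq: "{j. j < Suc i \<and> e \<in> S j} = insert i {j. j < i \<and> e \<in> S j}"
      using True by auto
    have "card {j. j < Suc i \<and> e \<in> S j} = Suc (card {j. j < i \<and> e \<in> S j})"
      unfolding eq by (subst card_insert_disjoint) auto
    then show ?thesis using Suc True by simp
  next
    case False
    have eq: "{j. j < Suc i \<and> e \<in> S j} = {j. j < i \<and> e \<in> S j}"
      using False less_Suc_eq by auto
    then show ?thesis using Suc False by simp
  qed
qed

lemma price_pos: "p0 > 0 \<Longrightarrow> r > 0 \<Longrightarrow> mpu_price p0 r S i e > 0"
  by (induction i) auto

lemma price_step_mono: "p0 \<ge> 0 \<Longrightarrow> r \<ge> 1 \<Longrightarrow> mpu_price p0 r S i e \<le> mpu_price p0 r S (Suc i) e"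
proof -
  assume a: "p0 \<ge> 0" "r \<ge> 1"
  have "mpu_price p0 r S i e \<ge> 0" using a by (induction i) auto
  then show ?thesis using a by (auto simp: mult_le_cancel_right1)
qed

lemma price_mono: "p0 \<ge> 0 \<Longrightarrow> r \<ge> 1 \<Longrightarrow> i \<le> j \<Longrightarrow> mpu_price p0 r S i e \<le> mpu_price p0 r S j e"
proof -
  assume a: "p0 \<ge> 0" "r \<ge> 1" "i \<le> j"
  have "\<And>k. mpu_price p0 r S k e \<le> mpu_price p0 r S (Suc k) e"
    using price_step_mono[OF a(1,2)] .
  then show ?thesis using lift_Suc_mono_le[of "\<lambda>i. mpu_price p0 r S i e", OF _ a(3)] by blast
qed

lemma potential_step:
  assumes "finite U" "S i \<subseteq> U"
  shows "(\<Sum>e\<in>U. mpu_price p0 r S (Suc i) e) = (\<Sum>e\<in>U. mpu_price p0 r S i e) + (r - 1) * (\<Sum>e\<in>S i. mpu_price p0 r S i e)"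
proof -
  have "(\<Sum>e\<in>U. mpu_price p0 r S (Suc i) e) = (\<Sum>e\<in>U. mpu_price p0 r S i e + (if e \<in> S i then (r - 1) * mpu_price p0 r S i e else 0))"
    by (rule sum.cong) (auto simp: algebra_simps)
  also have "\<dots> = (\<Sum>e\<in>U. mpu_price p0 r S i e) + (\<Sum>e\<in>U. (if e \<in> S i then (r - 1) * mpu_price p0 r S i e else 0))"
    by (simp add: sum.distrib)
  also have "(\<Sum>e\<in>U. (if e \<in> S i then (r - 1) * mpu_price p0 r S i e else 0)) = (\<Sum>e\<in>U \<inter> S i. (r - 1) * mpu_price p0 r S i e)"
    using assms(1) by (simp add: sum.inter_restrict)
  also have "U \<inter> S i = S i" using assms(2) by auto
  finally show ?thesis by (simp add: sum_distrib_left)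
qed

lemma sum_swap_count:
  fixes n :: nat
  assumes "finite U" "\<And>i. i < n \<Longrightarrow> T i \<subseteq> U"
  shows "(\<Sum>i<n. \<Sum>e\<in>T i. f e) = (\<Sum>e\<in>U. f e * real (card {i. i < n \<and> e \<in> T i}))"
proof -
  have "(\<Sum>i<n. \<Sum>e\<in>T i. f e) = (\<Sum>i<n. \<Sum>e\<in>U. if e \<in> T i then f e else 0)"
  proof (rule sum.cong)
    fix i assume "i \<in> {..<n}"
    then have "U \<inter> T i = T i" using assms(2) by auto
    then show "(\<Sum>e\<in>T i. f e) = (\<Sum>e\<in>U. if e \<in> T i then f e else 0)"
      using assms(1) sum.inter_restrict[of U f "T i"] by simp
  qed simp
  also have "\<dots> = (\<Sum>e\<in>U. \<Sum>i<n. if e \<in> T i then f e else 0)"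
    by (rule sum.swap)
  also have "\<dots> = (\<Sum>e\<in>U. f e * real (card {i. i < n \<and> e \<in> T i}))"
  proof (rule sum.cong)
    fix e
    have "(\<Sum>i<n. if e \<in> T i then f e else 0) = (\<Sum>i<n. if i \<in> {i. e \<in> T i} then f e else 0)"
      by simp
    also have "\<dots> = (\<Sum>i\<in>{..<n} \<inter> {i. e \<in> T i}. f e)"
      by (rule sum.inter_restrict[symmetric]) simp
    also have "{..<n} \<inter> {i. e \<in> T i} = {i. i < n \<and> e \<in> T i}" by auto
    finally show "(\<Sum>i<n. if e \<in> T i then f e else 0) = f e * real (card {i. i < n \<and> e \<in> T i})"
      by simp
  qed simp
  finally show ?thesis .
qed

lemma vext_ge:
  assumes "finite (Sc i)" "T \<in> Sc i" "T \<subseteq> X"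
  shows "v i T \<le> vext Sc v i X"
proof -
  have ne: "{S'\<in>Sc i. S' \<subseteq> X} \<noteq> {}" using assms by auto
  have "v i T \<le> Max (v i ` {S'\<in>Sc i. S' \<subseteq> X})"
    by (rule Max_ge) (use assms in auto)
  then show ?thesis unfolding vext_def if_not_P[OF ne] .
qed

lemma vext_nonneg:
  assumes "finite (Sc i)" "\<And>S'. S' \<in> Sc i \<Longrightarrow> v i S' \<ge> 0"
  shows "vext Sc v i X \<ge> 0"
proof (cases "{S'\<in>Sc i. S' \<subseteq> X} = {}")
  case True then show ?thesis unfolding vext_def by simp
next
  case False
  then obtain T where T: "T \<in> Sc i" "T \<subseteq> X" by auto
  have "0 \<le> v i T" using assms T by auto
  also have "\<dots> \<le> vext Sc v i X" using vext_ge[of Sc i T X v, OF assms(1) T] .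
  finally show ?thesis .
qed

theorem theorem3:
  fixes U :: "'g set" and m b n k :: nat and Sc :: "nat \<Rightarrow> 'g set set"
    and v :: "nat \<Rightarrow> 'g set \<Rightarrow> real" and \<mu> :: real and S :: "nat \<Rightarrow> 'g set"
  assumes "finite U" and "card U = m" and "b \<ge> 1" and "n \<ge> 1" and "k \<ge> 1"
    and "\<And>i. i < n \<Longrightarrow> finite (Sc i) \<and> card (Sc i) = k"
    and "\<And>i S'. i < n \<Longrightarrow> S' \<in> Sc i \<Longrightarrow> S' \<noteq> {} \<and> S' \<subseteq> U"
    and "\<And>i S'. i < n \<Longrightarrow> S' \<in> Sc i \<Longrightarrow> v i S' \<ge> 0"
    and "\<mu> > 0" and "\<mu> / 2 \<le> vmax n Sc v" and "vmax n Sc v < \<mu>"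
    and "mpu_run n Sc v (\<mu> / (4 * b * m)) ((4 * b * m) powr (1 / b)) S"
  shows "feasible_alloc U b n S
    \<and> welfare n Sc v S \<ge> OPT U b n Sc v / (2 * (b * ((4 * b * m) powr (1 / b) - 1) + 1))
    \<and> 2 * (b * ((4 * b * m) powr (1 / b) - 1) + 1) \<le> 8 * b * m powr (1 / b)"
proof -
  define p0 where "p0 = \<mu> / (4 * b * m)"
  define r where "r = (4 * b * m) powr (1 / b)"
  have run: "mpu_run n Sc v p0 r S" using assms(12) unfolding p0_def r_def .
  note fin = assms(1)
  have finSc: "\<And>i. i < n \<Longrightarrow> finite (Sc i)" using assms(6) by blast
  have ScU: "\<And>i S'. i < n \<Longrightarrow> S' \<in> Sc i \<Longrightarrow> S' \<subseteq> U" using assms(7) by blast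
  have vnn: "\<And>i S'. i < n \<Longrightarrow> S' \<in> Sc i \<Longrightarrow> v i S' \<ge> 0" using assms(8) by blast
  have "Sc 0 \<noteq> {}" using assms(6)[of 0] assms(4,5) by auto
  then obtain S0 where "S0 \<in> Sc 0" by auto
  then have "S0 \<noteq> {} \<and> S0 \<subseteq> U" using assms(7)[of 0] assms(4) by auto
  then have "U \<noteq> {}" by auto
  then have "card U > 0" using fin by (simp add: card_gt_0_iff)
  then have mpos: "m \<ge> 1" using assms(2) by simp
  have bpos: "real b \<ge> 1" using assms(3) by simp
  have Mge: "(4 * real b * real m) \<ge> 1"
  proof -
    have "1 \<le> real m" using mpos by simp
    then have "1 * 1 \<le> real b * real m" using mult_mono[OF bpos] by simp
    then show ?thesis by simp
  qed
  have p0pos: "p0 > 0" unfolding p0_def using assms(9) Mge by simp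
  have rge: "r \<ge> 1" unfolding r_def using Mge by (simp add: ge_one_powr_ge_zero)
  have rb: "r ^ b = 4 * real b * real m"
  proof -
    have "r ^ b = r powr real b" using rge by (simp add: powr_realpow)
    also have "\<dots> = 4 * real b * real m" unfolding r_def using Mge assms(3) by (simp add: powr_powr)
    finally show ?thesis .
  qed
  have p0m: "real m * p0 = \<mu> / (4 * b)" unfolding p0_def using mpos by simp
  define P where "P = mpu_price p0 r S"
  have Ppos: "\<And>i e. P i e > 0" unfolding P_def using p0pos rge by (simp add: price_pos)
  have Pmono: "\<And>i j e. i \<le> j \<Longrightarrow> P i e \<le> P j e" unfolding P_def
    using p0pos rge price_mono by (metis less_imp_le)
  define A where "A i = affordable Sc v p0 r S i" for i
  define w where "w i = (if A i = {} then 0 else v i (S i))" for i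
  have runI: "\<And>i. i < n \<Longrightarrow> (if A i = {} then S i = {} else S i \<in> A i \<and> (\<forall>T\<in>A i. v i T \<le> v i (S i)))"
    using run unfolding mpu_run_def A_def by blast
  have runE: "\<And>i. i < n \<Longrightarrow> A i = {} \<Longrightarrow> S i = {}"
  proof -
    fix i assume "i < n" "A i = {}"
    then show "S i = {}" using runI[of i] by simp
  qed
  have runN: "\<And>i. i < n \<Longrightarrow> A i \<noteq> {} \<Longrightarrow> S i \<in> A i \<and> (\<forall>T\<in>A i. v i T \<le> v i (S i))"
  proof -
    fix i assume "i < n" "A i \<noteq> {}"
    then show "S i \<in> A i \<and> (\<forall>T\<in>A i. v i T \<le> v i (S i))" using runI[of i] by simp
  qed
  have Adef: "\<And>i T. T \<in> A i \<longleftrightarrow> T \<in> Sc i \<and> v i T \<ge> (\<Sum>e\<in>T. P i e)"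
    unfolding A_def affordable_def P_def by simp
  have sub: "\<And>i. i < n \<Longrightarrow> S i \<subseteq> U"
  proof -
    fix i assume i: "i < n"
    show "S i \<subseteq> U"
    proof (cases "A i = {}")
      case True then show ?thesis using runE[OF i] by simp
    next
      case False
      then have "S i \<in> A i" using runN[OF i] by blast
      then have "S i \<in> Sc i" using Adef by blast
      then show ?thesis using ScU[OF i] by blast
    qed
  qed
  have wnn: "\<And>i. i < n \<Longrightarrow> w i \<ge> 0"
  proof -
    fix i assume i: "i < n"
    show "w i \<ge> 0"
    proof (cases "A i = {}")
      case True then show ?thesis unfolding w_def by simp
    next
      case False
      then have "S i \<in> A i" using runN[OF i] by blast
      then have "S i \<in> Sc i" using Adef by blast
      then show ?thesis unfolding w_def using False vnn[OF i] by simp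
    qed
  qed
  have wsum: "\<And>i. i < n \<Longrightarrow> (\<Sum>e\<in>S i. P i e) \<le> w i"
  proof -
    fix i assume i: "i < n"
    show "(\<Sum>e\<in>S i. P i e) \<le> w i"
    proof (cases "A i = {}")
      case True then show ?thesis unfolding w_def using runE[OF i] by simp
    next
      case False
      then have "S i \<in> A i" using runN[OF i] by blast
      then show ?thesis unfolding w_def using False Adef by simp
    qed
  qed
  have wle: "\<And>i. i < n \<Longrightarrow> w i \<le> vext Sc v i (S i)"
  proof -
    fix i assume i: "i < n"
    show "w i \<le> vext Sc v i (S i)"
    proof (cases "A i = {}")
      case True then show ?thesis unfolding w_def using vext_nonneg[of Sc i v "S i", OF finSc[OF i]] vnn[OF i] by simp
    next
      case False
      then have "S i \<in> Sc i" using runN[OF i] Adef by blast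
      then show ?thesis unfolding w_def using False vext_ge[of Sc i "S i" "S i" v, OF finSc[OF i]] by simp
    qed
  qed
  define W where "W = (\<Sum>i<n. w i)"
  have Wnn: "W \<ge> 0" unfolding W_def using wnn by (meson lessThan_iff sum_nonneg)
  have welfS: "W \<le> welfare n Sc v S" unfolding W_def welfare_def
    by (rule sum_mono) (use wle in auto)
  have VSeq: "{v i S | i S. i < n \<and> S \<in> Sc i} = (\<Union>i<n. v i ` Sc i)" by auto
  have VSfin: "finite {v i S | i S. i < n \<and> S \<in> Sc i}" unfolding VSeq using finSc by auto
  have vmax_ge: "\<And>i T. i < n \<Longrightarrow> T \<in> Sc i \<Longrightarrow> v i T \<le> vmax n Sc v"
    unfolding vmax_def by (rule Max_ge[OF VSfin]) auto
  have VSne: "{v i S | i S. i < n \<and> S \<in> Sc i} \<noteq> {}"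
  proof -
    have "(0::nat) < n" using assms(4) by simp
    then have "v 0 S0 \<in> {v i S | i S. i < n \<and> S \<in> Sc i}" using \<open>S0 \<in> Sc 0\<close> by blast
    then show ?thesis by blast
  qed
  have "vmax n Sc v \<in> {v i S | i S. i < n \<and> S \<in> Sc i}" unfolding vmax_def
    using Max_in[OF VSfin VSne] .
  then obtain i0 T0 where i0: "i0 < n" "T0 \<in> Sc i0" "v i0 T0 = vmax n Sc v" by auto
  define \<Phi> where "\<Phi> i = (\<Sum>e\<in>U. P i e)" for i
  have phi: "\<And>i. i \<le> n \<Longrightarrow> \<Phi> i \<le> real m * p0 + (r - 1) * (\<Sum>j<i. w j)"
  proof -
    fix i show "i \<le> n \<Longrightarrow> \<Phi> i \<le> real m * p0 + (r - 1) * (\<Sum>j<i. w j)"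
    proof (induction i)
      case 0 then show ?case unfolding \<Phi>_def P_def using assms(2) by simp
    next
      case (Suc i)
      then have i: "i < n" by simp
      have "\<Phi> (Suc i) = \<Phi> i + (r - 1) * (\<Sum>e\<in>S i. P i e)"
        unfolding \<Phi>_def P_def using potential_step[of U S i p0 r, OF fin sub[OF i]] .
      also have "\<dots> \<le> \<Phi> i + (r - 1) * w i"
        using wsum[OF i] rge by (simp add: mult_left_mono)
      also have "\<dots> \<le> real m * p0 + (r - 1) * (\<Sum>j<i. w j) + (r - 1) * w i"
        using Suc by simp
      finally show ?case by (simp add: algebra_simps)
    qed
  qed
  have phin: "\<Phi> n \<le> \<mu> / (4 * b) + (r - 1) * W" using phi[of n] p0m unfolding W_def by simp
  have cardb: "\<And>e. e \<in> U \<Longrightarrow> card {j. j < n \<and> e \<in> S j} \<le> b"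
  proof -
    fix e assume eU: "e \<in> U"
    have "\<And>i. i \<le> n \<Longrightarrow> card {j. j < i \<and> e \<in> S j} \<le> b"
    proof -
      fix i show "i \<le> n \<Longrightarrow> card {j. j < i \<and> e \<in> S j} \<le> b"
      proof (induction i)
        case 0 then show ?case by simp
      next
        case (Suc i)
        then have i: "i < n" and IH: "card {j. j < i \<and> e \<in> S j} \<le> b" by auto
        show ?case
        proof (cases "e \<in> S i")
          case False
          have "{j. j < Suc i \<and> e \<in> S j} = {j. j < i \<and> e \<in> S j}"
            using False less_Suc_eq by auto
          then show ?thesis using IH by simp
        next
          case True
          have eq: "{j. j < Suc i \<and> e \<in> S j} = insert i {j. j < i \<and> e \<in> S j}"
            using True by auto
          have c: "card {j. j < Suc i \<and> e \<in> S j} = Suc (card {j. j < i \<and> e \<in> S j})"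
            unfolding eq by (subst card_insert_disjoint) auto
          have "card {j. j < i \<and> e \<in> S j} \<noteq> b"
          proof
            assume cb: "card {j. j < i \<and> e \<in> S j} = b"
            have Ane: "A i \<noteq> {}" using runE[OF i] True by auto
            then have SA: "S i \<in> A i" using runN[OF i] by blast
            have "\<mu> = P i e" unfolding P_def price_formula cb rb p0_def using mpos assms(3) by simp
            also have "\<dots> \<le> (\<Sum>x\<in>S i. P i x)"
              by (rule member_le_sum) (use True Ppos finite_subset[OF sub[OF i] fin] in \<open>auto intro: less_imp_le\<close>)
            also have "\<dots> \<le> v i (S i)" using SA Adef by blast
            also have "\<dots> \<le> vmax n Sc v" using vmax_ge[OF i] SA Adef by blast
            finally show False using assms(11) by simp
          qed
          then show ?thesis using c IH by simp
        qed
      qed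
    qed
    then show "card {j. j < n \<and> e \<in> S j} \<le> b" by simp
  qed
  have feas: "feasible_alloc U b n S" unfolding feasible_alloc_def using sub cardb by auto
  have key: "\<mu> / 4 \<le> (b * (r - 1) + 1) * W"
  proof (cases "T0 \<in> A i0")
    case True
    then have "A i0 \<noteq> {}" by auto
    then have "v i0 T0 \<le> w i0" unfolding w_def using runN[OF i0(1)] True by auto
    also have "w i0 \<le> W" unfolding W_def by (rule member_le_sum) (use i0 wnn in auto)
    finally have "\<mu> / 2 \<le> W" using i0(3) assms(10) by simp
    moreover have "0 \<le> b * (r - 1) * W" using rge Wnn by simp
    moreover have "(b * (r - 1) + 1) * W = b * (r - 1) * W + W" by (simp add: algebra_simps)
    ultimately show ?thesis using assms(9) by linarith
  next
    case False
    then have "v i0 T0 < (\<Sum>e\<in>T0. P i0 e)" using Adef i0 by (meson not_le)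
    also have "\<dots> \<le> (\<Sum>e\<in>T0. P n e)" by (rule sum_mono) (use Pmono i0 in auto)
    also have "\<dots> \<le> \<Phi> n" unfolding \<Phi>_def
      by (rule sum_mono2[OF fin]) (use ScU[OF i0(1,2)] Ppos in \<open>auto intro: less_imp_le\<close>)
    finally have "\<mu> / 2 < \<mu> / (4 * b) + (r - 1) * W" using phin i0(3) assms(10) by simp
    moreover have "\<mu> / (4 * b) \<le> \<mu> / 4" using bpos assms(9)
      by (simp add: divide_le_eq mult_le_cancel_left1)
    ultimately have "\<mu> / 4 \<le> (r - 1) * W" by simp
    moreover have "(r - 1) * W \<le> b * ((r - 1) * W)" using mult_right_mono[OF bpos, of "(r - 1) * W"] rge Wnn by simp
    ultimately show ?thesis using Wnn by (simp add: algebra_simps)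
  qed
  define C where "C = 2 * (b * (r - 1) + 1)"
  have Cpos: "C > 0"
  proof -
    have "0 \<le> real b * (r - 1)" using rge by simp
    then have "0 < real b * (r - 1) + 1" by simp
    then show ?thesis unfolding C_def by simp
  qed
  have optb: "\<And>T. feasible_alloc U b n T \<Longrightarrow> welfare n Sc v T \<le> C * W"
  proof -
    fix T assume fT: "feasible_alloc U b n T"
    have TU: "\<And>i. i < n \<Longrightarrow> T i \<subseteq> U" and Tc: "\<And>e. e \<in> U \<Longrightarrow> card {i. i < n \<and> e \<in> T i} \<le> b"
      using fT unfolding feasible_alloc_def by auto
    have per: "\<And>i. i < n \<Longrightarrow> vext Sc v i (T i) \<le> w i + (\<Sum>e\<in>T i. P n e)"
    proof -
      fix i assume i: "i < n"
      have sT: "(\<Sum>e\<in>T i. P n e) \<ge> 0" using Ppos by (simp add: less_imp_le sum_nonneg)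
      show "vext Sc v i (T i) \<le> w i + (\<Sum>e\<in>T i. P n e)"
      proof (cases "{S'\<in>Sc i. S' \<subseteq> T i} = {}")
        case True then show ?thesis unfolding vext_def using wnn[OF i] sT by simp
      next
        case False
        have "Max (v i ` {S'\<in>Sc i. S' \<subseteq> T i}) \<in> v i ` {S'\<in>Sc i. S' \<subseteq> T i}"
          by (rule Max_in) (use False finSc[OF i] in auto)
        then obtain T' where T': "T' \<in> Sc i" "T' \<subseteq> T i" "vext Sc v i (T i) = v i T'"
          unfolding vext_def if_not_P[OF False] by blast
        show ?thesis
        proof (cases "T' \<in> A i")
          case True
          then have "A i \<noteq> {}" by auto
          then have "v i T' \<le> w i" unfolding w_def using runN[OF i] True by auto
          then show ?thesis using T'(3) sT by simp
        next
          case False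
          then have "v i T' < (\<Sum>e\<in>T'. P i e)" using Adef T' by (meson not_le)
          also have "\<dots> \<le> (\<Sum>e\<in>T'. P n e)" by (rule sum_mono) (use Pmono i in auto)
          also have "\<dots> \<le> (\<Sum>e\<in>T i. P n e)"
            by (rule sum_mono2) (use T' TU[OF i] finite_subset[OF _ fin] Ppos in \<open>auto intro: less_imp_le\<close>)
          finally show ?thesis using T'(3) wnn[OF i] by simp
        qed
      qed
    qed
    have "welfare n Sc v T \<le> (\<Sum>i<n. w i + (\<Sum>e\<in>T i. P n e))"
      unfolding welfare_def by (rule sum_mono) (use per in auto)
    also have "\<dots> = W + (\<Sum>i<n. \<Sum>e\<in>T i. P n e)" unfolding W_def by (simp add: sum.distrib)
    also have "(\<Sum>i<n. \<Sum>e\<in>T i. P n e) = (\<Sum>e\<in>U. P n e * real (card {i. i < n \<and> e \<in> T i}))"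
      by (rule sum_swap_count[OF fin TU])
    also have "\<dots> \<le> (\<Sum>e\<in>U. P n e * real b)"
    proof (rule sum_mono)
      fix e assume e: "e \<in> U"
      have "real (card {i. i < n \<and> e \<in> T i}) \<le> real b" using Tc[OF e] by simp
      then show "P n e * real (card {i. i < n \<and> e \<in> T i}) \<le> P n e * real b"
        using Ppos[of n e] by (simp add: mult_left_mono)
    qed
    also have "\<dots> = b * \<Phi> n" unfolding \<Phi>_def by (simp add: sum_distrib_left mult.commute)
    also have "W + \<dots> \<le> W + b * (\<mu> / (4 * b) + (r - 1) * W)"
      using phin bpos by (simp add: mult_left_mono)
    also have "\<dots> = W + \<mu> / 4 + b * (r - 1) * W" using bpos by (simp add: algebra_simps)
    also have "\<dots> \<le> C * W" unfolding C_def using key by (simp add: algebra_simps)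
    finally show "welfare n Sc v T \<le> C * W" by simp
  qed
  have "OPT U b n Sc v \<le> C * W" unfolding OPT_def
  proof (rule cSup_least)
    have "feasible_alloc U b n (\<lambda>_. {})" unfolding feasible_alloc_def by simp
    then show "{welfare n Sc v T |T. feasible_alloc U b n T} \<noteq> {}" by auto
  qed (use optb in auto)
  then have "OPT U b n Sc v / C \<le> W" using Cpos by (simp add: divide_le_eq mult.commute)
  then have part2: "welfare n Sc v S \<ge> OPT U b n Sc v / C" using welfS by simp
  have pow4: "4 * real b \<le> 4 ^ b"
  proof -
    have "4 * b \<le> (4::nat) ^ b" using assms(3)
    proof (induction b rule: nat_induct_at_least)
      case base then show ?case by simp
    next
      case (Suc b) then show ?case by simp
    qed
    then show ?thesis by (metis of_nat_le_iff of_nat_mult of_nat_numeral of_nat_power)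
  qed
  have r4: "(4 * real b) powr (1 / b) \<le> 4"
  proof -
    have "(4 * real b) powr (1 / b) \<le> (4 ^ b) powr (1 / b)"
      by (rule powr_mono2) (use pow4 in auto)
    also have "(4 ^ b :: real) powr (1 / b) = 4"
    proof -
      have "(4::real) ^ b = 4 powr (real b)" by (simp add: powr_realpow)
      then have "((4::real) ^ b) powr (1 / b) = 4 powr (real b * (1 / real b))" by (simp add: powr_powr)
      also have "real b * (1 / real b) = 1" using assms(3) by simp
      finally show ?thesis by simp
    qed
    finally show ?thesis .
  qed
  have rsplit: "r = (4 * real b) powr (1 / b) * real m powr (1 / b)"
    unfolding r_def by (simp add: powr_mult)
  have "r \<le> 4 * real m powr (1 / b)" unfolding rsplit
    by (rule mult_right_mono[OF r4]) simp
  then have h1: "real b * r \<le> real b * (4 * real m powr (1 / b))"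
    by (rule mult_left_mono) simp
  have h2: "2 * (real b * (r - 1) + 1) \<le> 2 * (real b * r)" using bpos by (simp add: algebra_simps)
  have h3: "2 * (real b * r) \<le> 8 * real b * real m powr (1 / b)" using h1 by (simp add: algebra_simps)
  have "C \<le> 8 * real b * real m powr (1 / b)" unfolding C_def using h2 h3 by linarith
  then show ?thesis using feas part2 unfolding C_def r_def p0_def by simp
qed

end
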